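(* Let $D\ge2$ be square-free, $K=\mathbb{Q}(\sqrt D)$ with ring of integers $\mathbb{Z}_K$, and let $u_D$ be defined as follows: fix the real embedding with $\sqrt D>0$, let $u_f$ be the fundamental unit of $K$ that is $>1$ under it, and set $u_D=u_f^2$ if $u_f$ has norm $-1$ and $u_D=u_f$ otherwise. For $r\ge1$ let $d_r=1+u_D^r+u_D^{-r}\in\mathbb{Z}$, and let $d_r'=d_r$ if $d_r$ is odd and $d_r'=2d_r$ if $d_r$ is even. Then the multiplicative order of $u_D$ in $(\mathbb{Z}_K/d_r'\mathbb{Z}_K)^\times$ is $3r\,\frac{d_r'}{d_r}$; that is, it is $3r$ if $d_r$ is odd and $6r$ if $d_r$ is even. *)

theory Defs
  imports Complex_Main "HOL-Computational_Algebra.Polynomial" "HOL-Computational_Algebra.Squarefree"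
begin

text \<open>We work inside the real numbers, via the real embedding of K = Q(sqrt D)
  with sqrt D > 0.\<close>

definition qfield :: "nat \<Rightarrow> real set" where
  "qfield D = {x. \<exists>p q. p \<in> \<rat> \<and> q \<in> \<rat> \<and> x = p + q * sqrt (real D)}"

definition alg_int :: "real \<Rightarrow> bool" where
  "alg_int x \<longleftrightarrow> (\<exists>p :: int poly. lead_coeff p = 1 \<and> poly (map_poly real_of_int p) x = 0)"

definition ring_of_ints :: "nat \<Rightarrow> real set" where
  "ring_of_ints D = {x \<in> qfield D. alg_int x}"

definition qconj :: "nat \<Rightarrow> real \<Rightarrow> real" where
  "qconj D x = (THE y. \<exists>p q. p \<in> \<rat> \<and> q \<in> \<rat> \<and> x = p + q * sqrt (real D) \<and> y = p - q * sqrt (real D))"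

definition qnorm :: "nat \<Rightarrow> real \<Rightarrow> real" where
  "qnorm D x = x * qconj D x"

definition qunits :: "nat \<Rightarrow> real set" where
  "qunits D = {x \<in> ring_of_ints D. x \<noteq> 0 \<and> inverse x \<in> ring_of_ints D}"

definition fund_unit :: "nat \<Rightarrow> real" where
  "fund_unit D = (LEAST u. u \<in> qunits D \<and> u > 1)"

definition uD :: "nat \<Rightarrow> real" where
  "uD D = (if qnorm D (fund_unit D) = -1 then (fund_unit D)^2 else fund_unit D)"

text \<open>d_r = 1 + u_D^r + u_D^(-r), an integer.\<close>
definition d_r :: "nat \<Rightarrow> nat \<Rightarrow> int" where
  "d_r D r = \<lfloor>1 + uD D ^ r + inverse (uD D) ^ r\<rfloor>"

definition d_r' :: "nat \<Rightarrow> nat \<Rightarrow> int" where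
  "d_r' D r = (if odd (d_r D r) then d_r D r else 2 * d_r D r)"

definition cong_OK :: "nat \<Rightarrow> int \<Rightarrow> real \<Rightarrow> real \<Rightarrow> bool" where
  "cong_OK D m x y \<longleftrightarrow> (x - y) / real_of_int m \<in> ring_of_ints D"

definition ord_mod :: "nat \<Rightarrow> int \<Rightarrow> real \<Rightarrow> nat" where
  "ord_mod D m x = (LEAST n::nat. n > 0 \<and> cong_OK D m (x ^ n) 1)"

end

theory Submission
  imports Defs "HOL-Analysis.Kronecker_Approximation_Theorem"
begin


lemma common_denom:
  fixes f :: "rat poly"
  shows "\<exists>a::int. \<exists>A :: int poly. a > 0 \<and> map_poly of_int A = smult (of_int a) f"
proof (induction f)
  case 0
  show ?case by (rule exI[of _ 1], rule exI[of _ 0]) simp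
next
  case (pCons c f)
  then obtain a A where aA: "a > 0" "map_poly of_int A = smult (of_int a) f" by blast
  obtain n k where nk: "quotient_of c = (n, k)" by (cases "quotient_of c")
  have k: "k > 0" and c: "c = of_int n / of_int k"
    using quotient_of_denom_pos[OF nk] quotient_of_div[OF nk] by auto
  show ?case
  proof (intro exI conjI)
    show "a * k > 0" using aA k by simp
    show "map_poly of_int (pCons (n * a) (smult k A)) = smult (of_int (a * k)) (pCons c f)"
      using aA k c by (simp add: map_poly_pCons map_poly_smult mult.commute)
  qed
qed

lemma map_poly_of_int_inj:
  fixes A B :: "int poly"
  assumes "(map_poly of_int A :: rat poly) = map_poly of_int B"
  shows "A = B"
  using assms by (simp add: poly_eq_iff coeff_map_poly)

lemma map_poly_of_int_mult:
  "(map_poly of_int (A * B) :: 'a::comm_ring_1 poly) = map_poly of_int A * map_poly of_int B"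
  by (simp add: poly_eq_iff coeff_map_poly coeff_mult of_int_sum)

lemma map_poly_of_rat_mult:
  "(map_poly of_rat (A * B) :: 'a::field_char_0 poly) = map_poly of_rat A * map_poly of_rat B"
  by (simp add: poly_eq_iff coeff_map_poly coeff_mult of_rat_sum of_rat_mult)

lemma content_monic: fixes P :: "int poly" assumes "lead_coeff P = 1" shows "Polynomial.content P = 1"
proof -
  have "Polynomial.content P dvd 1" using content_dvd_coeff[of P "degree P"] assms by simp
  moreover have "Polynomial.content P \<ge> 0"
    by (metis abs_of_nonneg normalize_content normalize_int_def abs_ge_zero)
  ultimately show ?thesis by (simp add: zdvd1_eq) 
qed

lemma gauss_monic:
  fixes f g :: "rat poly" and P :: "int poly"
  assumes fg: "f * g = map_poly of_int P" and lf: "lead_coeff f = 1" and lP: "lead_coeff P = 1"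
  shows "coeff f i \<in> \<int>"
proof -
  have lg: "lead_coeff g = 1"
  proof -
    have "lead_coeff (f*g) = lead_coeff (map_poly of_int P :: rat poly)" using fg by simp
    also have "\<dots> = 1" using lP by (simp add: degree_map_poly coeff_map_poly)
    finally show ?thesis using lf by (simp add: lead_coeff_mult)
  qed
  obtain a A where aA: "a > 0" "map_poly of_int A = smult (of_int a) f" using common_denom by blast
  obtain b B where bB: "b > 0" "map_poly of_int B = smult (of_int b) g" using common_denom by blast
  have "(map_poly of_int (A * B) :: rat poly) = map_poly of_int A * map_poly of_int B"
    by (rule map_poly_of_int_mult)
  also have "\<dots> = smult (of_int (a*b)) (f*g)" using aA bB by (simp add: mult.commute)
  also have "\<dots> = map_poly of_int (smult (a*b) P)" using fg by (simp add: map_poly_smult)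
  finally have AB: "A * B = smult (a*b) P" by (rule map_poly_of_int_inj)
  have cc: "Polynomial.content A * Polynomial.content B = a * b"
    using content_mult[of A B] AB content_monic[OF lP] aA bB by (simp add: content_smult)
  have la: "lead_coeff A = a"
  proof -
    have "rat_of_int (lead_coeff A) = lead_coeff (map_poly rat_of_int A)"
      by (simp add: degree_map_poly coeff_map_poly)
    also have "\<dots> = of_int a" using aA lf by (simp add: degree_map_poly)
    finally show ?thesis by simp
  qed
  have lb: "lead_coeff B = b"
  proof -
    have "rat_of_int (lead_coeff B) = lead_coeff (map_poly rat_of_int B)"
      by (simp add: degree_map_poly coeff_map_poly)
    also have "\<dots> = of_int b" using bB lg by (simp add: degree_map_poly)
    finally show ?thesis by simp
  qed
  have nn: "Polynomial.content X \<ge> 0" for X :: "int poly"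
    by (metis normalize_content normalize_int_def abs_ge_zero)
  have ca: "Polynomial.content A dvd a" using content_dvd_coeff[of A "degree A"] la by simp
  have cb: "Polynomial.content B dvd b" using content_dvd_coeff[of B "degree B"] lb by simp
  have "Polynomial.content A \<le> a" using zdvd_imp_le[OF ca] aA by simp
  moreover have "Polynomial.content B \<le> b" using zdvd_imp_le[OF cb] bB by simp
  ultimately have caa: "Polynomial.content A = a" using cc nn[of A] nn[of B] aA bB
    by (smt (verit) mult_left_mono mult_strict_right_mono)
  have "a dvd coeff A i" using content_dvd_coeff[of A i] caa by simp
  then obtain k where k: "coeff A i = a * k" by blast
  have "rat_of_int (coeff A i) = of_int a * coeff f i"
    using arg_cong[OF aA(2), of "\<lambda>p. coeff p i"] by (simp add: coeff_map_poly)
  hence "coeff f i = of_int k" using k aA by simp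
  thus ?thesis by simp
qed


locale qf =
  fixes D :: nat
  assumes D2: "D \<ge> 2" and sqf: "squarefree D"
begin

definition s :: real where "s = sqrt (real D)"

lemma s_sq: "s * s = real D" unfolding s_def by simp
lemma s_pos: "s > 0" unfolding s_def using D2 by simp

lemma s_irr: "s \<notin> \<rat>"
proof
  assume "s \<in> \<rat>"
  moreover have "algebraic_int s"
    unfolding algebraic_int_altdef_ipoly
    by (rule exI[of _ "[:- int D, 0, 1:]"]) (simp add: map_poly_pCons s_sq)
  ultimately have "s \<in> \<int>" using rational_algebraic_int_is_int by blast
  then obtain k where k: "s = of_int k" by (auto elim: Ints_cases)
  have "k \<ge> 0" using k s_pos by simp
  then obtain n where n: "k = int n" using nonneg_int_cases by blast
  have "real (n * n) = real D" using s_sq k n by simp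
  hence "n * n = D" by (simp only: of_nat_eq_iff)
  hence "n dvd 1" using sqf unfolding squarefree_def by (metis dvd_refl power2_eq_square)
  hence "n = 1" by simp
  thus False using \<open>n * n = D\<close> D2 by simp
qed

lemma rep_unique:
  assumes "p \<in> \<rat>" "q \<in> \<rat>" "p' \<in> \<rat>" "q' \<in> \<rat>" "p + q * s = p' + q' * s"
  shows "p = p' \<and> q = q'"
proof (cases "q = q'")
  case True thus ?thesis using assms by simp
next
  case False
  hence "s = (p' - p) / (q - q')" using assms(5) by (simp add: field_simps)
  also have "\<dots> \<in> \<rat>" using assms by simp
  finally show ?thesis using s_irr by simp
qed

lemma qconj_eq: assumes "p \<in> \<rat>" "q \<in> \<rat>" shows "qconj D (p + q * s) = p - q * s"
  unfolding qconj_def s_def[symmetric]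
proof (rule the_equality)
  show "\<exists>pa qa. pa \<in> \<rat> \<and> qa \<in> \<rat> \<and> p + q * s = pa + qa * s \<and> p - q * s = pa - qa * s"
    using assms by blast
next
  fix y assume "\<exists>pa qa. pa \<in> \<rat> \<and> qa \<in> \<rat> \<and> p + q * s = pa + qa * s \<and> y = pa - qa * s"
  then obtain pa qa where "pa \<in> \<rat>" "qa \<in> \<rat>" "p + q * s = pa + qa * s" "y = pa - qa * s" by blast
  with rep_unique[OF assms] show "y = p - q * s" by auto
qed

lemma qnorm_eq: assumes "p \<in> \<rat>" "q \<in> \<rat>" shows "qnorm D (p + q * s) = p^2 - real D * q^2"
  unfolding qnorm_def qconj_eq[OF assms] using s_sq by (simp add: algebra_simps power2_eq_square)

lemma qfield_iff: "x \<in> qfield D \<longleftrightarrow> (\<exists>p q. p \<in> \<rat> \<and> q \<in> \<rat> \<and> x = p + q * s)"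
  unfolding qfield_def s_def by simp

lemma alg_int_iff: "alg_int x \<longleftrightarrow> algebraic_int x"
  unfolding alg_int_def algebraic_int_altdef_ipoly by (simp add: conj_commute)

lemma ZK_imp:
  assumes "p \<in> \<rat>" "q \<in> \<rat>" "algebraic_int (p + q * s)"
  shows "2 * p \<in> \<int> \<and> p^2 - real D * q^2 \<in> \<int>"
proof (cases "q = 0")
  case True
  hence "p \<in> \<int>" using assms rational_algebraic_int_is_int by simp
  thus ?thesis using True by simp
next
  case False
  define x where "x = p + q * s"
  obtain p0 where p0: "p = of_rat p0" using assms(1) by (auto elim: Rats_cases)
  obtain q0 where q0: "q = of_rat q0" using assms(2) by (auto elim: Rats_cases)
  from assms(3) obtain P where P: "poly (map_poly of_int P) x = 0" "lead_coeff P = 1"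
    unfolding algebraic_int_altdef_ipoly x_def by blast
  define m :: "rat poly" where "m = [: p0^2 - of_nat D * q0^2, -2 * p0, 1:]"
  define Pr :: "rat poly" where "Pr = map_poly of_int P"
  define E :: "rat poly \<Rightarrow> real" where "E f = poly (map_poly of_rat f) x" for f
  have Emult: "E (f * g) = E f * E g" for f g
    unfolding E_def by (simp add: map_poly_of_rat_mult)
  have Eadd: "E (f + g) = E f + E g" for f g
  proof -
    have "map_poly of_rat (f + g) = (map_poly of_rat f + map_poly of_rat g :: real poly)"
      by (simp add: poly_eq_iff coeff_map_poly of_rat_add)
    thus ?thesis unfolding E_def by simp
  qed
  have EPr: "E Pr = 0"
  proof -
    have "map_poly (of_rat :: rat \<Rightarrow> real) Pr = map_poly of_int P"
      unfolding Pr_def by (simp add: map_poly_map_poly o_def)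
    thus ?thesis using P unfolding E_def by simp
  qed
  have "E m = x^2 - 2*p*x + (p^2 - real D * q^2)"
    unfolding E_def m_def using p0 q0
    by (simp add: map_poly_pCons of_rat_add of_rat_mult of_rat_diff of_rat_power of_rat_minus algebra_simps power2_eq_square)
  also have "\<dots> = q^2 * (s * s) - real D * q^2"
    unfolding x_def by (simp add: algebra_simps power2_eq_square)
  also have "\<dots> = 0" using s_sq by simp
  finally have Em: "E m = 0" .
  have m0: "m \<noteq> 0" unfolding m_def by simp
  define g where "g = Pr div m"
  define r where "r = Pr mod m"
  have Pr_eq: "Pr = m * g + r" unfolding g_def r_def by (simp add: mult.commute)
  have dm: "degree m = 2" unfolding m_def by simp
  have "r = 0 \<or> degree r < 2" using degree_mod_less[OF m0, of Pr] dm r_def by simp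
  hence dr: "degree r \<le> 1" by auto
  have r_eq: "r = [: coeff r 0, coeff r 1 :]"
    using dr by (auto simp: poly_eq_iff coeff_pCons split: nat.splits intro!: coeff_eq_0)
  have "E r = 0" using EPr Em Pr_eq Emult Eadd by simp
  hence "of_rat (coeff r 0) + of_rat (coeff r 1) * x = (0::real)"
    by (subst (asm) r_eq) (simp add: E_def map_poly_pCons mult.commute)
  hence eq: "(of_rat (coeff r 0) + of_rat (coeff r 1) * p) + (of_rat (coeff r 1) * q) * s = 0 + 0 * s"
    unfolding x_def by (simp add: algebra_simps)
  have "of_rat (coeff r 1) * q = 0"
    using rep_unique[OF _ _ _ _ eq] assms by simp
  hence "coeff r 1 = 0" using False by simp
  moreover have "coeff r 0 = 0" using rep_unique[OF _ _ _ _ eq] assms \<open>coeff r 1 = 0\<close> by simp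
  ultimately have "r = 0" using r_eq by simp
  hence "m * g = map_poly of_int P" using Pr_eq Pr_def by simp
  moreover have "lead_coeff m = 1" unfolding m_def by simp
  ultimately have ci: "coeff m i \<in> \<int>" for i using gauss_monic P(2) by blast
  have "coeff m 1 \<in> \<int>" by (rule ci)
  hence "-2 * p0 \<in> \<int>" unfolding m_def by simp
  hence "2 * p0 \<in> \<int>" using Ints_minus by fastforce
  then obtain a where "2 * p0 = of_int a" by (auto elim: Ints_cases)
  hence "2 * p = of_int a" using p0 by (metis of_rat_mult of_rat_numeral_eq of_rat_of_int_eq)
  moreover have "coeff m 0 \<in> \<int>" by (rule ci)
  then obtain b where "p0^2 - of_nat D * q0^2 = of_int b" unfolding m_def by (auto elim: Ints_cases)
  hence "p^2 - real D * q^2 = of_int b" using p0 q0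
    by (metis of_rat_diff of_rat_mult of_rat_of_nat_eq of_rat_power of_rat_of_int_eq)
  ultimately show ?thesis by simp
qed

end

context qf begin

definition isZ :: "real \<Rightarrow> real \<Rightarrow> bool" where
  "isZ p q \<longleftrightarrow> p \<in> \<rat> \<and> q \<in> \<rat> \<and> 2 * p \<in> \<int> \<and> p^2 - real D * q^2 \<in> \<int>"

lemma ZK_iff: "x \<in> ring_of_ints D \<longleftrightarrow> (\<exists>p q. isZ p q \<and> x = p + q * s)"
proof
  assume "x \<in> ring_of_ints D"
  then obtain p q where "p \<in> \<rat>" "q \<in> \<rat>" "x = p + q * s" "alg_int x"
    unfolding ring_of_ints_def qfield_iff by blast
  thus "\<exists>p q. isZ p q \<and> x = p + q * s" using ZK_imp alg_int_iff isZ_def by blast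
next
  assume "\<exists>p q. isZ p q \<and> x = p + q * s"
  then obtain p q where pq: "isZ p q" "x = p + q * s" by blast
  then obtain a b where ab: "2 * p = of_int a" "p^2 - real D * q^2 = of_int b"
    unfolding isZ_def by (auto elim!: Ints_cases)
  have "x \<in> qfield D" using pq unfolding qfield_iff isZ_def by blast
  moreover have "alg_int x"
    unfolding alg_int_def
  proof (intro exI conjI)
    show "lead_coeff [:b, -a, 1:] = 1" by simp
    have "poly (map_poly real_of_int [:b, -a, 1:]) x = x^2 - 2*p*x + (p^2 - real D * q^2)"
      using ab by (simp add: map_poly_pCons algebra_simps power2_eq_square)
    also have "\<dots> = q^2 * (s * s) - real D * q^2"
      unfolding pq by (simp add: algebra_simps power2_eq_square)
    also have "\<dots> = 0" using s_sq by simp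
    finally show "poly (map_poly real_of_int [:b, -a, 1:]) x = 0" .
  qed
  ultimately show "x \<in> ring_of_ints D" unfolding ring_of_ints_def by simp
qed

lemma isZ_core:
  assumes "isZ p1 q1" "isZ p2 q2"
  shows "2 * (p1 * p2 + real D * q1 * q2) \<in> \<int>"
proof -
  define T where "T = 2 * (p1 * p2 + real D * q1 * q2)"
  define T' where "T' = 2 * (p1 * p2 - real D * q1 * q2)"
  obtain a1 where a1: "2 * p1 = of_int a1" using assms unfolding isZ_def by (auto elim!: Ints_cases)
  obtain a2 where a2: "2 * p2 = of_int a2" using assms unfolding isZ_def by (auto elim!: Ints_cases)
  obtain n1 where n1: "p1^2 - real D * q1^2 = of_int n1" using assms unfolding isZ_def by (auto elim!: Ints_cases)
  obtain n2 where n2: "p2^2 - real D * q2^2 = of_int n2" using assms unfolding isZ_def by (auto elim!: Ints_cases)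
  have sum: "T + T' = of_int (a1 * a2)"
  proof -
    have "T + T' = (2*p1) * (2*p2)" unfolding T_def T'_def by (simp add: algebra_simps)
    thus ?thesis using a1 a2 by simp
  qed
  have prod: "T * T' = of_int (n2 * (a1^2 - 2*n1) + n1 * (a2^2 - 2*n2))"
  proof -
    have "T * T' = (p2^2 - real D * q2^2) * ((2*p1)^2 - 2*(p1^2 - real D * q1^2))
                 + (p1^2 - real D * q1^2) * ((2*p2)^2 - 2*(p2^2 - real D * q2^2))"
      unfolding T_def T'_def by (simp add: algebra_simps power2_eq_square)
    thus ?thesis unfolding a1 a2 n1 n2 by simp
  qed
  have "T \<in> \<rat>" using assms unfolding T_def isZ_def by simp
  moreover have "algebraic_int T"
    unfolding algebraic_int_altdef_ipoly
  proof (intro exI conjI)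
    show "lead_coeff [:n2 * (a1^2 - 2*n1) + n1 * (a2^2 - 2*n2), -(a1*a2), 1:] = 1" by simp
    have "poly (map_poly real_of_int [:n2 * (a1^2 - 2*n1) + n1 * (a2^2 - 2*n2), -(a1*a2), 1:]) T
          = T*T' - (T + T') * T + T * T"
      unfolding sum prod by (simp add: map_poly_pCons algebra_simps)
    also have "\<dots> = 0" by (simp add: algebra_simps)
    finally show "poly (map_poly real_of_int [:n2 * (a1^2 - 2*n1) + n1 * (a2^2 - 2*n2), -(a1*a2), 1:]) T = 0" .
  qed
  ultimately show ?thesis using rational_algebraic_int_is_int T_def by blast
qed

lemma isZ_neg_q: "isZ p q \<Longrightarrow> isZ p (-q)" unfolding isZ_def by simp
lemma isZ_neg: "isZ p q \<Longrightarrow> isZ (-p) (-q)" unfolding isZ_def by simp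

lemma isZ_add: assumes "isZ p1 q1" "isZ p2 q2" shows "isZ (p1 + p2) (q1 + q2)"
proof -
  have c: "2 * (p1 * p2 + real D * q1 * (-q2)) \<in> \<int>" using isZ_core[OF assms(1) isZ_neg_q[OF assms(2)]] .
  have "(p1+p2)^2 - real D * (q1+q2)^2 = (p1^2 - real D * q1^2) + (p2^2 - real D*q2^2) + 2 * (p1 * p2 + real D * q1 * (-q2))"
    by (simp add: algebra_simps power2_eq_square)
  also have "\<dots> \<in> \<int>" using c assms unfolding isZ_def by simp
  finally show ?thesis using assms unfolding isZ_def by (simp add: distrib_left)
qed

lemma isZ_mult: assumes "isZ p1 q1" "isZ p2 q2"
  shows "isZ (p1 * p2 + real D * q1 * q2) (p1 * q2 + p2 * q1)"
proof -
  have "(p1 * p2 + real D * q1 * q2)^2 - real D * (p1 * q2 + p2 * q1)^2 = (p1^2 - real D * q1^2) * (p2^2 - real D*q2^2)"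
    by (simp add: algebra_simps power2_eq_square)
  also have "\<dots> \<in> \<int>" using assms unfolding isZ_def by simp
  finally show ?thesis using assms isZ_core[OF assms] unfolding isZ_def by simp
qed

lemma ZK_add: assumes "x \<in> ring_of_ints D" "y \<in> ring_of_ints D" shows "x + y \<in> ring_of_ints D"
proof -
  obtain p1 q1 p2 q2 where A: "isZ p1 q1" "x = p1 + q1 * s" "isZ p2 q2" "y = p2 + q2 * s"
    using assms unfolding ZK_iff by blast
  have "x + y = (p1 + p2) + (q1 + q2) * s" using A by (simp add: algebra_simps)
  thus ?thesis unfolding ZK_iff using isZ_add[OF A(1,3)] by blast
qed

lemma ZK_mult: assumes "x \<in> ring_of_ints D" "y \<in> ring_of_ints D" shows "x * y \<in> ring_of_ints D"
proof -
  obtain p1 q1 p2 q2 where A: "isZ p1 q1" "x = p1 + q1 * s" "isZ p2 q2" "y = p2 + q2 * s"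
    using assms unfolding ZK_iff by blast
  have "x * y = (p1 * p2 + real D * q1 * q2) + (p1 * q2 + p2 * q1) * s"
    using s_sq A by (simp add: algebra_simps)
  thus ?thesis unfolding ZK_iff using isZ_mult[OF A(1,3)] by blast
qed

lemma ZK_neg: assumes "x \<in> ring_of_ints D" shows "-x \<in> ring_of_ints D"
proof -
  obtain p q where A: "isZ p q" "x = p + q * s" using assms unfolding ZK_iff by blast
  have "-x = (-p) + (-q) * s" using A by simp
  thus ?thesis unfolding ZK_iff using isZ_neg[OF A(1)] by blast
qed

lemma ZK_diff: "x \<in> ring_of_ints D \<Longrightarrow> y \<in> ring_of_ints D \<Longrightarrow> x - y \<in> ring_of_ints D"
  using ZK_add[of x "-y"] ZK_neg[of y] by simp

lemma ZK_int: "of_int k \<in> ring_of_ints D"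
  unfolding ZK_iff isZ_def by (rule exI[of _ "of_int k"], rule exI[of _ 0]) simp

lemma ZK_1: "1 \<in> ring_of_ints D" using ZK_int[of 1] by simp

lemma ZK_pow: "x \<in> ring_of_ints D \<Longrightarrow> x ^ n \<in> ring_of_ints D"
  by (induction n) (auto intro: ZK_mult ZK_1)

lemma ZK_rep: assumes "x \<in> ring_of_ints D"
  obtains p q where "isZ p q" "x = p + q * s" using assms unfolding ZK_iff by blast

lemma qnorm_isZ: "isZ p q \<Longrightarrow> qnorm D (p + q * s) = p^2 - real D * q^2"
  using qnorm_eq isZ_def by blast

lemma ZK_norm: assumes "x \<in> ring_of_ints D" shows "qnorm D x \<in> \<int>"
proof -
  obtain p q where A: "isZ p q" "x = p + q * s" using assms by (rule ZK_rep)
  show ?thesis using qnorm_isZ[OF A(1)] A isZ_def by simp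
qed

lemma ZK_trace: "x \<in> ring_of_ints D \<Longrightarrow> x + qconj D x \<in> \<int>"
proof -
  assume "x \<in> ring_of_ints D"
  then obtain p q where pq: "isZ p q" "x = p + q * s" by (rule ZK_rep)
  have "qconj D x = p - q * s" using qconj_eq pq isZ_def by auto
  hence e: "x + qconj D x = 2 * p" using pq by simp
  have "2 * p \<in> \<int>" using pq(1) unfolding isZ_def by blast
  thus ?thesis unfolding e .
qed

lemma qnorm_mult: assumes "x \<in> ring_of_ints D" "y \<in> ring_of_ints D"
  shows "qnorm D (x * y) = qnorm D x * qnorm D y"
proof -
  obtain p1 q1 p2 q2 where A: "isZ p1 q1" "x = p1 + q1 * s" "isZ p2 q2" "y = p2 + q2 * s"
    using assms unfolding ZK_iff by blast
  have "x * y = (p1 * p2 + real D * q1 * q2) + (p1 * q2 + p2 * q1) * s"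
    using s_sq A by (simp add: algebra_simps)
  hence "qnorm D (x*y) = (p1 * p2 + real D * q1 * q2)^2 - real D * (p1 * q2 + p2 * q1)^2"
    using qnorm_isZ[OF isZ_mult[OF A(1,3)]] by simp
  also have "\<dots> = (p1^2 - real D * q1^2) * (p2^2 - real D*q2^2)"
    by (simp add: algebra_simps power2_eq_square)
  finally show ?thesis using A qnorm_isZ by simp
qed

lemma qnorm_pow: "x \<in> ring_of_ints D \<Longrightarrow> qnorm D (x ^ n) = qnorm D x ^ n"
proof (induction n)
  case 0
  have "qnorm D 1 = 1" using qnorm_isZ[of 1 0] unfolding isZ_def by simp
  thus ?case by simp
next
  case (Suc n) thus ?case using qnorm_mult[OF _ ZK_pow] by simp
qed

lemma qnorm_conj: "x \<in> ring_of_ints D \<Longrightarrow> qnorm D x = 1 \<Longrightarrow> qconj D x = inverse x"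
  unfolding qnorm_def by (metis inverse_unique)

lemma unit_iff: "x \<in> qunits D \<longleftrightarrow> x \<in> ring_of_ints D \<and> (qnorm D x = 1 \<or> qnorm D x = -1)"
proof
  assume u: "x \<in> qunits D"
  hence x: "x \<in> ring_of_ints D" "x \<noteq> 0" "inverse x \<in> ring_of_ints D" unfolding qunits_def by auto
  have "qnorm D x * qnorm D (inverse x) = qnorm D 1" using qnorm_mult[OF x(1) x(3)] x(2) by simp
  also have "qnorm D 1 = 1" using qnorm_isZ[of 1 0] unfolding isZ_def by simp
  finally have e: "qnorm D x * qnorm D (inverse x) = 1" .
  obtain a where a: "qnorm D x = of_int a" using ZK_norm[OF x(1)] by (auto elim: Ints_cases)
  obtain b where b: "qnorm D (inverse x) = of_int b" using ZK_norm[OF x(3)] by (auto elim: Ints_cases)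
  have "a * b = 1" using e a b by (metis of_int_eq_1_iff of_int_mult)
  hence "a = 1 \<or> a = -1" using zmult_eq_1_iff by blast
  thus "x \<in> ring_of_ints D \<and> (qnorm D x = 1 \<or> qnorm D x = -1)" using a x by auto
next
  assume A: "x \<in> ring_of_ints D \<and> (qnorm D x = 1 \<or> qnorm D x = -1)"
  then obtain p q where pq: "isZ p q" "x = p + q * s" using ZK_rep by blast
  define N where "N = p^2 - real D * q^2"
  have N: "N = 1 \<or> N = -1" using A pq qnorm_isZ N_def by auto
  have "x * (p - q * s) = N" unfolding pq N_def using s_sq
    by (simp add: algebra_simps power2_eq_square)
  hence x0: "x \<noteq> 0" using N by auto
  have inv: "inverse x = (p / N) + (- q / N) * s"
    using \<open>x * (p - q * s) = N\<close> N x0 by (auto simp: field_simps)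
  have "isZ (p / N) (- q / N)"
    using N pq(1) unfolding isZ_def N_def
    by (auto simp: power2_eq_square)
  hence "inverse x \<in> ring_of_ints D" unfolding ZK_iff using inv by blast
  thus "x \<in> qunits D" using A x0 unfolding qunits_def by simp
qed

end

context qf begin

lemma s_gt1: "s > 1" unfolding s_def using D2 by simp

lemma approx_inf: "infinite (approx_set s)"
  using rational_iff_finite_approx_set s_irr by blast

lemma norm_nz: fixes h k :: int assumes "k > 0" shows "h^2 - int D * k^2 \<noteq> 0"
proof
  assume "h^2 - int D * k^2 = 0"
  hence "real_of_int (h^2) = real D * real_of_int (k^2)" by (metis eq_iff_diff_eq_0 of_int_eq_iff of_int_mult of_int_of_nat_eq)
  hence "(real_of_int \<bar>h\<bar> / real_of_int k)^2 = real D" using assms by (simp add: power_divide field_simps)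
  hence "s = real_of_int \<bar>h\<bar> / real_of_int k" unfolding s_def using assms by (metis abs_ge_zero divide_nonneg_pos of_int_0_le_iff of_int_0_less_iff real_sqrt_unique)
  moreover have "real_of_int \<bar>h\<bar> / real_of_int k \<in> \<rat>" by simp
  ultimately show False using s_irr by simp
qed

lemma norm_bound:
  assumes "(h, k) \<in> approx_set s"
  shows "\<bar>h^2 - int D * k^2\<bar> \<le> \<lceil>1 + 2 * s\<rceil>"
proof -
  have k: "k > 0" and a: "\<bar>s - of_int h / of_int k\<bar> < 1 / (of_int k)^2"
    using assms unfolding approx_set_def by auto
  have "\<bar>of_int k * s - of_int h\<bar> = of_int k * \<bar>s - of_int h / of_int k\<bar>"
    using k by (simp add: abs_mult[symmetric] field_simps)
  also have "\<dots> < of_int k * (1 / (of_int k)^2)" using k by (intro mult_strict_left_mono[OF a]) simp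
  also have "\<dots> = 1 / of_int k" using k by (simp add: power2_eq_square)
  finally have b1: "\<bar>of_int h - of_int k * s\<bar> < 1 / of_int k" by simp
  have k1: "1 / real_of_int k \<le> 1" using k by simp
  have c1: "of_int h - of_int k * s < 1" "of_int k * s - of_int h < 1"
    using b1 k1 unfolding abs_less_iff by linarith+
  have kp: "0 < of_int k * s" using k s_pos by simp
  have b2: "\<bar>of_int h + of_int k * s\<bar> \<le> 1 + 2 * of_int k * s"
    unfolding abs_le_iff using c1 kp by (intro conjI; linarith)
  have fac: "(of_int h - of_int k * s) * (of_int h + of_int k * s) = of_int h ^ 2 - of_int k ^ 2 * (s * s)"
    by (simp add: algebra_simps power2_eq_square)
  have "real_of_int \<bar>h^2 - int D * k^2\<bar> = \<bar>(of_int h - of_int k * s) * (of_int h + of_int k * s)\<bar>"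
    unfolding fac s_sq by (simp add: mult.commute)
  also have "\<dots> = \<bar>of_int h - of_int k * s\<bar> * \<bar>of_int h + of_int k * s\<bar>" by (rule abs_mult)
  also have "\<dots> \<le> (1 / of_int k) * (1 + 2 * of_int k * s)"
    using b1 b2 k by (intro mult_mono) auto
  also have "\<dots> = 1 / of_int k + 2 * s" using k by (simp add: field_simps)
  also have "\<dots> \<le> 1 + 2 * s" using k1 by simp
  finally show ?thesis by linarith
qed

lemma pell: "\<exists>X Y :: int. Y \<noteq> 0 \<and> X^2 - int D * Y^2 = 1"
proof -
  define M where "M = \<lceil>1 + 2 * s\<rceil>"
  define f where "f = (\<lambda>(h::int, k::int). (h^2 - int D * k^2, h mod (h^2 - int D * k^2), k mod (h^2 - int D * k^2)))"
  have modb: "b \<noteq> 0 \<Longrightarrow> \<bar>a mod b\<bar> \<le> \<bar>b\<bar>" for a b :: int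
    by (cases "b > 0") (auto simp: abs_le_iff neg_mod_bound neg_mod_sign pos_mod_bound pos_mod_sign less_imp_le)
  have "f ` approx_set s \<subseteq> {-M..M} \<times> {-M..M} \<times> {-M..M}"
  proof
    fix y assume "y \<in> f ` approx_set s"
    then obtain h k where hk: "(h,k) \<in> approx_set s" "y = f (h,k)" by auto
    have Mb: "\<bar>h^2 - int D * k^2\<bar> \<le> M" using norm_bound[OF hk(1)] M_def by simp
    have "h^2 - int D * k^2 \<noteq> 0" using hk(1) norm_nz unfolding approx_set_def by auto
    with Mb show "y \<in> {-M..M} \<times> {-M..M} \<times> {-M..M}"
      using hk(2) modb[where a=h and b="h^2 - int D * k^2"] modb[where a=k and b="h^2 - int D * k^2"]
      unfolding f_def by (auto simp: abs_le_iff)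
  qed
  hence "finite (f ` approx_set s)" by (rule finite_subset) auto
  hence "\<not> inj_on f (approx_set s)" using approx_inf finite_imageD by blast
  then obtain h1 k1 h2 k2 where hk: "(h1,k1) \<in> approx_set s" "(h2,k2) \<in> approx_set s"
      "(h1,k1) \<noteq> (h2,k2)" "f (h1,k1) = f (h2,k2)"
    unfolding inj_on_def by auto
  define N where "N = h1^2 - int D * k1^2"
  have k1: "k1 > 0" "coprime h1 k1" and k2: "k2 > 0" "coprime h2 k2"
    using hk unfolding approx_set_def by auto
  have N2: "N = h2^2 - int D * k2^2" and m1: "h1 mod N = h2 mod N" and m2: "k1 mod N = k2 mod N"
    using hk(4) unfolding f_def N_def by auto
  have N0: "N \<noteq> 0" using norm_nz[OF k1(1)] N_def by simp
  obtain a where a: "h2 = h1 + N * a" using m1 by (metis mod_eq_dvd_iff dvdE add_diff_cancel_left' diff_add_cancel)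
  obtain b where b: "k2 = k1 + N * b" using m2 by (metis mod_eq_dvd_iff dvdE add_diff_cancel_left' diff_add_cancel)
  define X where "X = 1 + a * h1 - int D * b * k1"
  define Y where "Y = a * k1 - b * h1"
  have e1: "N * X = h1*h2 - int D*k1*k2" unfolding X_def a b N_def by (simp add: algebra_simps power2_eq_square)
  have e2: "N * Y = h2*k1 - h1*k2" unfolding Y_def a b by (simp add: algebra_simps)
  have "(N*X)^2 - int D*(N*Y)^2 = (h1^2 - int D*k1^2)*(h2^2 - int D*k2^2)"
    unfolding e1 e2 by (simp add: algebra_simps power2_eq_square)
  also have "\<dots> = N^2" using N_def N2 by (simp add: power2_eq_square)
  finally have "N^2 * (X^2 - int D * Y^2) = N^2 * 1" by (simp add: algebra_simps power2_eq_square)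
  hence XY: "X^2 - int D * Y^2 = 1" using N0 by simp
  have "Y \<noteq> 0"
  proof
    assume "Y = 0"
    hence eq: "h2 * k1 = h1 * k2" using e2 by simp
    have "k1 dvd h1 * k2" using eq by (metis dvd_triv_right)
    hence d1: "k1 dvd k2" using k1(2) by (metis coprime_commute coprime_dvd_mult_right_iff)
    have "k2 dvd h2 * k1" using eq by (metis dvd_triv_right)
    hence d2: "k2 dvd k1" using k2(2) by (metis coprime_commute coprime_dvd_mult_right_iff)
    have "k1 = k2" using d1 d2 k1 k2 by (simp add: zdvd_antisym_nonneg)
    hence "h1 = h2" using eq k1 by simp
    thus False using hk(3) \<open>k1 = k2\<close> by simp
  qed
  thus ?thesis using XY by blast
qed

lemma exists_unit: "\<exists>u. u \<in> qunits D \<and> u > 1"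
proof -
  obtain X Y :: int where XY: "Y \<noteq> 0" "X^2 - int D * Y^2 = 1" using pell by blast
  define u where "u = real_of_int \<bar>X\<bar> + real_of_int \<bar>Y\<bar> * s"
  have z: "isZ (real_of_int \<bar>X\<bar>) (real_of_int \<bar>Y\<bar>)"
    unfolding isZ_def by simp
  have n: "qnorm D u = 1"
  proof -
    have "qnorm D u = real_of_int \<bar>X\<bar>^2 - real D * real_of_int \<bar>Y\<bar>^2" unfolding u_def by (rule qnorm_isZ[OF z])
    also have "\<dots> = real_of_int (X^2 - int D * Y^2)" by simp
    finally show ?thesis using XY by simp
  qed
  have "u \<in> ring_of_ints D" unfolding ZK_iff u_def using z by blast
  hence "u \<in> qunits D" using n unit_iff by simp
  moreover have "u > 1"
  proof -
    have "real_of_int \<bar>Y\<bar> \<ge> 1" using XY by simp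
    hence "real_of_int \<bar>Y\<bar> * s > 1" using s_gt1 by (metis less_le_trans mult_less_cancel_left2 mult.commute less_numeral_extra(1) le_less_trans mult_le_cancel_right1 order_less_le not_less)
    thus ?thesis unfolding u_def by simp
  qed
  ultimately show ?thesis by blast
qed

end

context qf begin

lemma units_fin: "finite {u \<in> qunits D. 1 < u \<and> u \<le> B}"
proof -
  define g where "g = (\<lambda>(a::int, n::int). real_of_int a / 2 + sqrt ((real_of_int a^2 / 4 - real_of_int n) / real D) * s)"
  have "{u \<in> qunits D. 1 < u \<and> u \<le> B} \<subseteq> g ` ({0..\<lceil>B\<rceil>+1} \<times> {-1, 1})"
  proof
    fix u assume u: "u \<in> {u \<in> qunits D. 1 < u \<and> u \<le> B}"
    hence uz: "u \<in> ring_of_ints D" and un: "qnorm D u = 1 \<or> qnorm D u = -1" and u1: "1 < u" "u \<le> B"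
      using unit_iff by auto
    obtain p q where pq: "isZ p q" "u = p + q * s" using ZK_rep[OF uz] by blast
    have Nq: "qnorm D u = p^2 - real D * q^2" using qnorm_isZ pq by simp
    have c0: "(p + q * s) * (p - q * s) = p^2 - real D * q^2" using s_sq by (simp add: algebra_simps power2_eq_square)
    have c: "u * (p - q * s) = qnorm D u" using c0 Nq pq(2) by simp
    have "\<bar>p - q * s\<bar> < 1"
    proof -
      have "\<bar>u\<bar> * \<bar>p - q * s\<bar> = 1" using c un by (metis abs_mult abs_minus_cancel abs_one)
      thus ?thesis using u1 by (metis abs_of_pos less_le_trans mult_cancel_left1 mult_less_cancel_left_pos zero_less_one not_less_iff_gr_or_eq order_less_imp_le mult_le_cancel_left1)
    qed
    hence b1: "0 < 2 * p" "2 * p < B + 1" and qp: "q * s > 0" using u1 pq by (auto simp: abs_less_iff)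
    have q0: "q > 0" using qp s_pos by (simp add: zero_less_mult_iff)
    obtain a where a: "2 * p = of_int a" using pq unfolding isZ_def by (auto elim: Ints_cases)
    obtain n where n: "qnorm D u = of_int n" "n = -1 \<or> n = 1" using un by (metis of_int_1 of_int_minus)
    have "a \<ge> 0" using a b1 by simp
    moreover have "a \<le> \<lceil>B\<rceil> + 1" using a b1 by linarith
    moreover have "u = g (a, n)"
    proof -
      have h1: "q^2 * real D = p^2 - of_int n" using Nq n(1) by (simp add: algebra_simps)
      have h2: "real_of_int a^2 / 4 = p^2" using a[symmetric] by (simp add: power2_eq_square)
      have "q^2 = (real_of_int a^2 / 4 - real_of_int n) / real D"
        unfolding h2 h1[symmetric] using D2 by simp
      hence "q = sqrt ((real_of_int a^2 / 4 - real_of_int n) / real D)" using q0 by (metis real_sqrt_unique less_imp_le)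
      thus ?thesis unfolding g_def pq using a by simp
    qed
    ultimately show "u \<in> g ` ({0..\<lceil>B\<rceil>+1} \<times> {-1, 1})" using n(2) by auto
  qed
  thus ?thesis by (rule finite_subset) auto
qed

lemma fund_unit_props: "fund_unit D \<in> qunits D \<and> fund_unit D > 1"
proof -
  obtain u0 where u0: "u0 \<in> qunits D" "u0 > 1" using exists_unit by blast
  define F where "F = {u \<in> qunits D. 1 < u \<and> u \<le> u0}"
  have F: "finite F" "F \<noteq> {}" unfolding F_def using units_fin u0 by auto
  define m where "m = Min F"
  have mF: "m \<in> F" unfolding m_def using F by simp
  have "fund_unit D = m" unfolding fund_unit_def
  proof (rule Least_equality)
    show "m \<in> qunits D \<and> m > 1" using mF F_def by simp
    fix y assume y: "y \<in> qunits D \<and> y > 1"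
    show "m \<le> y"
    proof (cases "y \<le> u0")
      case True thus ?thesis using y F unfolding m_def F_def by simp
    next
      case False thus ?thesis using mF F_def by simp
    qed
  qed
  thus ?thesis using mF F_def by simp
qed

lemma uD_props: "uD D \<in> ring_of_ints D \<and> uD D > 1 \<and> qnorm D (uD D) = 1"
proof -
  define f where "f = fund_unit D"
  have f: "f \<in> ring_of_ints D" "qnorm D f = 1 \<or> qnorm D f = -1" "f > 1"
    using fund_unit_props unit_iff f_def by auto
  show ?thesis
  proof (cases "qnorm D f = -1")
    case True
    hence "uD D = f^2" unfolding uD_def f_def by simp
    moreover have "qnorm D (f^2) = 1" using qnorm_pow[OF f(1)] True by simp
    moreover have "f^2 > 1" using f(3) by (simp add: one_less_power)
    ultimately show ?thesis using ZK_pow[OF f(1)] by simp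
  next
    case False
    hence "uD D = f" unfolding uD_def f_def by simp
    thus ?thesis using f False by simp
  qed
qed

end

context qf begin

abbreviation "u \<equiv> uD D"

lemma u_ZK: "u \<in> ring_of_ints D" and u_gt1: "u > 1" and u_norm: "qnorm D u = 1"
  using uD_props by auto

lemma u_inv_ZK: "inverse u \<in> ring_of_ints D"
  using u_ZK u_norm unit_iff unfolding qunits_def by auto

lemma cong_sub:
  assumes "cong_OK D m (u^a) 1" "cong_OK D m (u^b) 1" "b < a"
  shows "cong_OK D m (u^(a-b)) 1"
proof -
  have "(u^(a-b) - 1) / real_of_int m = ((u^a - 1) / real_of_int m - (u^b - 1) / real_of_int m) * inverse u ^ b"
  proof -
    have ua: "u^a = u^(a-b) * u^b" using assms(3) by (simp add: power_add[symmetric])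
    have ub: "u^b \<noteq> 0" using u_gt1 by simp
    have e: "(u^a - u^b) * inverse u ^ b = u^(a-b) - 1"
      unfolding ua power_inverse using ub by (simp add: field_simps)
    have "((u^a - 1) / real_of_int m - (u^b - 1) / real_of_int m) * inverse u ^ b
        = ((u^a - u^b) * inverse u ^ b) / real_of_int m"
      by (simp add: diff_divide_distrib[symmetric])
    also have "\<dots> = (u^(a-b) - 1) / real_of_int m" unfolding e ..
    finally show ?thesis by simp
  qed
  also have "\<dots> \<in> ring_of_ints D"
    using assms unfolding cong_OK_def by (intro ZK_mult ZK_diff ZK_pow u_inv_ZK)
  finally show ?thesis unfolding cong_OK_def .
qed

lemma least_dvd:
  assumes "n > 0" "cong_OK D m (u^n) 1"
  shows "(LEAST n. n > 0 \<and> cong_OK D m (u^n) 1) dvd n"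
  using assms
proof (induction n rule: less_induct)
  case (less n)
  define n0 where "n0 = (LEAST n. n > 0 \<and> cong_OK D m (u^n) 1)"
  have n0: "n0 > 0" "cong_OK D m (u^n0) 1" using LeastI[of "\<lambda>n. n > 0 \<and> cong_OK D m (u^n) 1" n] less.prems
    unfolding n0_def by auto
  have "n0 \<le> n" unfolding n0_def using less.prems by (simp add: Least_le)
  show ?case
  proof (cases "n0 = n")
    case True thus ?thesis using n0_def by simp
  next
    case False
    hence lt: "n0 < n" using \<open>n0 \<le> n\<close> by simp
    have "cong_OK D m (u^(n-n0)) 1" using cong_sub[OF less.prems(2) n0(2) lt] .
    hence "n0 dvd (n - n0)" using less.IH[of "n - n0"] lt n0 unfolding n0_def by simp
    hence "n0 dvd n" using lt by (metis dvd_diff_nat dvd_refl le_add_diff_inverse less_imp_le dvd_add)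
    thus ?thesis unfolding n0_def .
  qed
qed

lemma qnorm_int: "qnorm D (of_int k) = of_int k ^ 2"
  using qnorm_isZ[of "of_int k" 0] unfolding isZ_def by simp

lemma qnorm_minus1: assumes "x \<in> ring_of_ints D"
  shows "qnorm D (x - 1) = qnorm D x - (x + qconj D x) + 1"
proof -
  obtain p q where pq: "isZ p q" "x = p + q * s" using ZK_rep[OF assms] by blast
  have pqr: "p \<in> \<rat>" "q \<in> \<rat>" using pq isZ_def by auto
  have "x - 1 = (p - 1) + q * s" using pq by simp
  hence "qnorm D (x - 1) = qnorm D ((p - 1) + q * s)" by (rule arg_cong)
  also have "\<dots> = (p - 1)^2 - real D * q^2" using qnorm_eq[of "p - 1" q] pqr by simp
  finally have "qnorm D (x - 1) = (p - 1)^2 - real D * q^2" .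
  moreover have "qnorm D x = p^2 - real D * q^2" using qnorm_eq pqr pq by simp
  moreover have "qconj D x = p - q * s" using qconj_eq pqr pq by simp
  ultimately show ?thesis using pq by (simp add: power2_eq_square algebra_simps)
qed

context
  fixes r :: nat
  assumes r1: "r \<ge> 1"
begin

definition v where "v = u ^ r"

lemma v_ZK: "v \<in> ring_of_ints D" unfolding v_def by (rule ZK_pow[OF u_ZK])
lemma v_gt1: "v > 1" unfolding v_def using u_gt1 r1 by (simp add: one_less_power)
lemma v_norm: "qnorm D v = 1" unfolding v_def using qnorm_pow[OF u_ZK] u_norm by simp
lemma v_conj: "qconj D v = inverse v" using qnorm_conj[OF v_ZK v_norm] .

definition T where "T = (THE T::int. v + inverse v = of_int T)"

lemma T: "v + inverse v = of_int T"
proof -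
  obtain k where k: "v + inverse v = of_int k" using ZK_trace[OF v_ZK] v_conj by (auto elim: Ints_cases)
  have "T = k" unfolding T_def by (rule the_equality) (use k in auto)
  thus ?thesis using k by simp
qed

lemma dr_eq: "d_r D r = 1 + T"
proof -
  have e: "1 + uD D ^ r + inverse (uD D) ^ r = real_of_int (1 + T)"
    using T unfolding v_def by (simp add: power_inverse add.assoc)
  show ?thesis unfolding d_r_def e by (rule floor_of_int)
qed

lemma T_ge: "T \<ge> 3"
proof -
  have "v + inverse v > 2"
  proof -
    have "(v - 1)^2 > 0" using v_gt1 by simp
    hence "v * v + 1 > 2 * v" by (simp add: power2_eq_square algebra_simps)
    hence "(v * v + 1) / v > 2" using v_gt1 by (simp add: field_simps)
    thus ?thesis using v_gt1 by (simp add: field_simps)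
  qed
  thus ?thesis using T by simp
qed

abbreviation "dd \<equiv> d_r D r"

lemma dd_real: "real_of_int dd = 1 + v + inverse v" using T dr_eq by simp
lemma dd_pos: "dd \<ge> 4" using dr_eq T_ge by simp

lemma hW: "real_of_int dd * v = v * v + v + 1"
  using dd_real v_gt1 by (simp add: field_simps)

lemma W0: "real_of_int dd \<noteq> 0" using dd_pos by simp

lemma div_eqI: "(y::real) \<noteq> 0 \<Longrightarrow> z * y = x \<Longrightarrow> x / y = z"
  by (simp add: divide_eq_eq)

lemma cong_3r: "cong_OK D dd (u^(3*r)) 1"
proof -
  have "u^(3*r) = v^3" unfolding v_def by (simp add: power_mult[symmetric] mult.commute)
  moreover have "(v^3 - 1) / real_of_int dd = (v - 1) * v"
  proof (rule div_eqI[OF W0])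
    have "(v - 1) * v * real_of_int dd = (v - 1) * (real_of_int dd * v)" by (simp add: algebra_simps)
    also have "\<dots> = v^3 - 1" unfolding hW by (simp add: algebra_simps power3_eq_cube)
    finally show "(v - 1) * v * real_of_int dd = v^3 - 1" .
  qed
  ultimately show ?thesis unfolding cong_OK_def using v_ZK ZK_1 by (simp add: ZK_mult ZK_diff)
qed

lemma no_small: assumes "0 < n" "n < 2 * r" "cong_OK D dd (u^n) 1" shows False
proof -
  define w where "w = u^n"
  have w1: "w > 1" unfolding w_def using u_gt1 assms by (simp add: one_less_power)
  have wZ: "w \<in> ring_of_ints D" unfolding w_def by (rule ZK_pow[OF u_ZK])
  have wn: "qnorm D w = 1" unfolding w_def using qnorm_pow[OF u_ZK] u_norm by simp
  have wc: "qconj D w = inverse w" using qnorm_conj[OF wZ wn] .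
  define z where "z = (w - 1) / real_of_int dd"
  have zZ: "z \<in> ring_of_ints D" using assms(3) unfolding z_def w_def cong_OK_def .
  have "w - 1 = of_int dd * z" unfolding z_def using dd_pos by simp
  hence "qnorm D (w - 1) = of_int dd ^ 2 * qnorm D z"
    using qnorm_mult[OF ZK_int zZ] qnorm_int by simp
  moreover have "qnorm D (w - 1) = 2 - (w + inverse w)" using qnorm_minus1[OF wZ] wn wc by simp
  ultimately have zn: "qnorm D z = (2 - (w + inverse w)) / of_int dd ^ 2" using dd_pos by (simp add: field_simps)
  have g2: "w + inverse w > 2"
  proof -
    have "(w - 1)^2 > 0" using w1 by simp
    hence "w * w + 1 > 2 * w" by (simp add: power2_eq_square algebra_simps)
    hence "(w * w + 1) / w > 2" using w1 by (simp add: field_simps)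
    thus ?thesis using w1 by (simp add: field_simps)
  qed
  have "w < v^2" unfolding w_def v_def using assms u_gt1 by (simp add: power_mult[symmetric] power_strict_increasing mult.commute)
  also have "v^2 < of_int dd ^ 2"
  proof -
    have "v < 1 + v + inverse v" using v_gt1 by (simp add: add_pos_pos)
    thus ?thesis unfolding dd_real using v_gt1 by (intro power_strict_mono) auto
  qed
  finally have "w < of_int dd ^ 2" .
  moreover have "inverse w < 1" using w1 by (simp add: inverse_less_1_iff)
  ultimately have "(w + inverse w) - 2 < of_int dd ^ 2" by simp
  hence bnd: "(w + inverse w) - 2 < of_int dd ^ 2" .
  have Wp: "real_of_int dd ^ 2 > 0" using W0 by simp
  have hN: "qnorm D z * real_of_int dd ^ 2 = 2 - (w + inverse w)" using zn Wp by simp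
  have "qnorm D z * real_of_int dd ^ 2 < 0 * real_of_int dd ^ 2" using hN g2 by simp
  hence "qnorm D z < 0" using Wp mult_nonneg_nonneg[of "qnorm D z" "real_of_int dd ^ 2"] by linarith
  moreover have "(-1) * real_of_int dd ^ 2 < qnorm D z * real_of_int dd ^ 2" using hN bnd by simp
  hence "-1 < qnorm D z" using Wp by (simp only: mult_less_cancel_right)
  ultimately have "qnorm D z > -1" "qnorm D z < 0" by auto
  moreover obtain k where "qnorm D z = of_int k" using ZK_norm[OF zZ] by (auto elim: Ints_cases)
  ultimately show False by simp
qed

lemma ord_dd: "(LEAST n. n > 0 \<and> cong_OK D dd (u^n) 1) = 3 * r"
proof -
  define n0 where "n0 = (LEAST n. n > 0 \<and> cong_OK D dd (u^n) 1)"
  have J: "3 * r > 0" using r1 by simp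
  have n0: "n0 > 0" "cong_OK D dd (u^n0) 1" using LeastI[of "\<lambda>n. n > 0 \<and> cong_OK D dd (u^n) 1" "3*r"] cong_3r J
    unfolding n0_def by auto
  have dv: "n0 dvd 3 * r" using least_dvd[OF J cong_3r] unfolding n0_def .
  show ?thesis
  proof (rule ccontr)
    assume "(LEAST n. n > 0 \<and> cong_OK D dd (u^n) 1) \<noteq> 3 * r"
    hence ne: "n0 \<noteq> 3 * r" unfolding n0_def .
    obtain k where k: "3 * r = n0 * k" using dv by blast
    have "k \<noteq> 1" using k ne by auto
    moreover have "k \<noteq> 0" using k J by auto
    ultimately have "k \<ge> 2" by simp
    hence "n0 * 2 \<le> 3 * r" using k by (metis mult_le_mono2)
    hence "n0 < 2 * r" using r1 by simp
    thus False using no_small n0 by blast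
  qed
qed

lemma dvd_dd: "n > 0 \<Longrightarrow> cong_OK D dd (u^n) 1 \<Longrightarrow> 3 * r dvd n"
  using least_dvd ord_dd by metis

lemma cong_half: "cong_OK D (2 * dd) x 1 \<Longrightarrow> cong_OK D dd x 1"
proof -
  assume "cong_OK D (2 * dd) x 1"
  hence "(x - 1) / real_of_int (2 * dd) \<in> ring_of_ints D" unfolding cong_OK_def .
  hence "real_of_int 2 * ((x - 1) / real_of_int (2 * dd)) \<in> ring_of_ints D"
    by (rule ZK_mult[OF ZK_int])
  moreover have "real_of_int 2 * ((x - 1) / real_of_int (2 * dd)) = (x - 1) / real_of_int dd" using W0 by (simp add: field_simps)
  ultimately show ?thesis unfolding cong_OK_def by simp
qed

lemma even_cong6: assumes "even dd" shows "cong_OK D (2 * dd) (u^(6*r)) 1"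
proof -
  obtain e where e: "dd = 2 * e" using assms by blast
  have "u^(6*r) = v^6" unfolding v_def by (simp add: power_mult[symmetric] mult.commute)
  moreover have "(v^6 - 1) / real_of_int (2 * dd) = v * ((v - 1)^2 * v * of_int e + (v - 1))"
  proof (rule div_eqI)
    show "real_of_int (2 * dd) \<noteq> 0" using W0 by simp
    have ee: "real_of_int dd = 2 * real_of_int e" using e by simp
    have "v * ((v - 1)^2 * v * of_int e + (v - 1)) * real_of_int (2 * dd)
        = v * ((v - 1)^2 * v * of_int e + (v - 1)) * (2 * (2 * real_of_int e))" using e by simp
    also have "\<dots> = (v - 1)^2 * ((2 * real_of_int e) * v)^2 + 2 * (v - 1) * ((2 * real_of_int e) * v)"
      by algebra
    also have "\<dots> = (v - 1)^2 * (real_of_int dd * v)^2 + 2 * (v - 1) * (real_of_int dd * v)"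
      by (simp only: ee)
    finally have "v * ((v - 1)^2 * v * of_int e + (v - 1)) * real_of_int (2 * dd)
        = (v - 1)^2 * (real_of_int dd * v)^2 + 2 * (v - 1) * (real_of_int dd * v)" .
    also have "\<dots> = v^6 - 1" unfolding hW by (simp add: algebra_simps power2_eq_square eval_nat_numeral)
    finally show "v * ((v - 1)^2 * v * of_int e + (v - 1)) * real_of_int (2 * dd) = v^6 - 1" .
  qed
  moreover have "v * ((v - 1)^2 * v * of_int e + (v - 1)) \<in> ring_of_ints D"
    using v_ZK ZK_1 ZK_int[of e] by (intro ZK_mult ZK_add ZK_pow ZK_diff) auto
  ultimately show ?thesis unfolding cong_OK_def by simp
qed

lemma even_not3: assumes "even dd" shows "\<not> cong_OK D (2 * dd) (u^(3*r)) 1"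
proof
  assume c: "cong_OK D (2 * dd) (u^(3*r)) 1"
  have h3: "u^(3*r) = v^3" unfolding v_def by (simp add: power_mult[symmetric] mult.commute)
  have eq: "(v^3 - 1) / real_of_int (2 * dd) = v * ((v - 1) / 2)"
  proof (rule div_eqI)
    show "real_of_int (2 * dd) \<noteq> 0" using W0 by simp
    have "v * ((v - 1) / 2) * real_of_int (2 * dd) = (v - 1) * (real_of_int dd * v)"
      by (simp add: field_simps)
    also have "\<dots> = v^3 - 1" unfolding hW by (simp add: algebra_simps power3_eq_cube)
    finally show "v * ((v - 1) / 2) * real_of_int (2 * dd) = v^3 - 1" .
  qed
  have "(v^3 - 1) / real_of_int (2 * dd) \<in> ring_of_ints D" using c unfolding cong_OK_def h3 .
  hence "v * ((v - 1) / 2) \<in> ring_of_ints D" unfolding eq .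
  moreover have iv: "inverse v \<in> ring_of_ints D"
    unfolding v_def power_inverse[symmetric] by (rule ZK_pow[OF u_inv_ZK])
  ultimately have A: "inverse v * (v * ((v - 1) / 2)) \<in> ring_of_ints D" using ZK_mult by blast
  have e2: "inverse v * (v * ((v - 1) / 2)) = (v - 1) / 2" using v_gt1 by simp
  have yZ: "(v - 1) / 2 \<in> ring_of_ints D" using A unfolding e2 .
  define y where "y = (v - 1) / 2"
  have yZ': "y \<in> ring_of_ints D" using yZ unfolding y_def .
  have m: "qnorm D (of_int 2 * y) = qnorm D (of_int 2) * qnorm D y" by (rule qnorm_mult[OF ZK_int yZ'])
  have e3: "of_int 2 * y = v - 1" unfolding y_def by simp
  have q4: "qnorm D (v - 1) = 4 * qnorm D y" using m qnorm_int[of 2] unfolding e3 by simp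
  have "qnorm D (v - 1) = 2 - of_int T" using qnorm_minus1[OF v_ZK] v_norm v_conj T by simp
  moreover obtain k where "qnorm D y = of_int k" using ZK_norm[OF yZ'] by (auto elim: Ints_cases)
  ultimately have "2 - T = 4 * k" using q4 by (metis of_int_eq_iff of_int_diff of_int_mult of_int_numeral)
  moreover have "odd (2 - T)" using assms dr_eq by simp
  ultimately show False by (metis dvd_mult2 even_numeral mult.commute dvd_triv_left even_mult_iff)
qed

lemma main_loc:
  "real (ord_mod D (d_r' D r) (uD D)) = 3 * real r * (real_of_int (d_r' D r) / real_of_int (d_r D r))"
proof (cases "odd dd")
  case True
  hence "d_r' D r = dd" unfolding d_r'_def by simp
  thus ?thesis using ord_dd dd_pos unfolding ord_mod_def by simp
next
  case False
  hence d': "d_r' D r = 2 * dd" unfolding d_r'_def by simp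
  define n1 where "n1 = (LEAST n. n > 0 \<and> cong_OK D (2 * dd) (u^n) 1)"
  have J: "6 * r > 0" using r1 by simp
  have n1: "n1 > 0" "cong_OK D (2 * dd) (u^n1) 1"
    using LeastI[of "\<lambda>n. n > 0 \<and> cong_OK D (2 * dd) (u^n) 1" "6*r"] even_cong6 False J
    unfolding n1_def by auto
  have d6: "n1 dvd 6 * r" using least_dvd[OF J even_cong6] False unfolding n1_def by simp
  have d3: "3 * r dvd n1" using dvd_dd[OF n1(1) cong_half[OF n1(2)]] .
  obtain k where k: "n1 = 3 * r * k" using d3 by blast
  have "3 * r * k dvd 3 * r * 2" using d6 k by (simp add: mult.commute mult.left_commute)
  hence "k dvd 2" using r1 by simp
  hence "k \<le> 2" by (simp add: dvd_imp_le)
  moreover have "k \<noteq> 0" using \<open>k dvd 2\<close> by (rule contrapos_pn) simp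
  ultimately have "k = 1 \<or> k = 2" by presburger
  moreover have "k \<noteq> 1" using k n1(2) even_not3 False by auto
  ultimately have "n1 = 6 * r" using k by simp
  thus ?thesis using d' dd_pos unfolding ord_mod_def n1_def by simp
qed

end

end

theorem mainTheorem6:
  fixes D r :: nat
  assumes "D \<ge> 2" and "squarefree D" and "r \<ge> 1"
  shows "real (ord_mod D (d_r' D r) (uD D))
           = 3 * real r * (real_of_int (d_r' D r) / real_of_int (d_r D r))"
proof -
  interpret qf D using assms by unfold_locales
  show ?thesis using main_loc[OF assms(3)] .
qed


end
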